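(* For any $F\in\mathscr{F}_2$ and $i\in[F]$: (i) for any $s\in\mathcal{S}$, with $f_i(s)=\gamma(s_1)\cdots\gamma(s_\rho)$ the $\gamma$-decomposition, $|\ddot{\gamma}(s_r)|=|\gamma(s_r)|$ for all $r=1,\dots,\rho$; (ii) $|\ddot{f}_i(s)|=|f_i(s)|$ for all $s\in\mathcal{S}$; (iii) for any $s,s'\in\mathcal{S}$, $f_i(s)\preceq f_i(s')$ if and only if $\ddot{f}_i(s)\preceq\ddot{f}_i(s')$.
   Context: $\mathcal{S}$ is a finite source alphabet with $|\mathcal{S}|\ge 2$ and $\mathcal{C}=\{0,1\}$; $\mathcal{A}^k,\mathcal{A}^{\ast},\mathcal{A}^{+}$ are sequences of length $k$, finite, positive finite length; $\lambda$ empty sequence; $\preceq$ prefix, $\prec$ proper prefix; $\mathrm{suff}(x_1\cdots x_n)=x_2\cdots x_n$; $\bar{c}=1-c$ for $c\in\mathcal{C}$. A code-tuple $F$ with $m\ge1$ code tables consists of maps $f_i:\mathcal{S}\to\mathcal{C}^{\ast}$ and $\tau_i:\mathcal{S}\to\{0,\dots,m-1\}$, $i\in[F]=\{0,\dots,m-1\}$. $f_i^{\ast}(\lambda)=\lambda$, $f_i^{\ast}(\pmb{x})=f_i(x_1)f^{\ast}_{\tau_i(x_1)}(\mathrm{suff}(\pmb{x}))$. For integer $k\ge0$, $\pmb{b}\in\mathcal{C}^{\ast}$: $\mathcal{P}^k_{F,i}(\pmb{b})$ is the set of $\pmb{c}\in\mathcal{C}^k$ such that some $\pmb{x}=x_1\cdots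 x_n\in\mathcal{S}^{+}$ has $f_i^{\ast}(\pmb{x})\succeq\pmb{b}\pmb{c}$ and $f_i(x_1)\succeq\pmb{b}$; $\bar{\mathcal{P}}^k_{F,i}(\pmb{b})$ the same with $f_i(x_1)\succ\pmb{b}$; $\mathcal{P}^k_{F,i}=\mathcal{P}^k_{F,i}(\lambda)$. $F\in\mathscr{F}_{2\text{-}\mathrm{dec}}$ if $\mathcal{P}^2_{F,\tau_i(s)}\cap\bar{\mathcal{P}}^2_{F,i}(f_i(s))=\emptyset$ for all $i,s$, and $\mathcal{P}^2_{F,\tau_i(s)}\cap\mathcal{P}^2_{F,\tau_i(s')}=\emptyset$ whenever $s\ne s'$, $f_i(s)=f_i(s')$. Fix $\mu:\mathcal{S}\to(0,1]$ with $\sum_s\mu(s)=1$; $Q_{i,j}(F)=\sum_{s:\tau_i(s)=j}\mu(s)$; $F\in\mathscr{F}_{\mathrm{reg}}$ if $\pmb{\pi}Q(F)=\pmb{\pi}$, $\sum_i\pi_i=1$ has a unique solution. $\mathscr{F}_2=\{F\in\mathscr{F}_{\mathrm{reg}}\cap\mathscr{F}_{2\text{-}\mathrm{dec}}:|\mathcal{P}^2_{F,i}|\ge3\ \forall i\in[F]\}$ (every such $F$ satisfies $\mathcal{P}^1_{F,i}=\{0,1\}$ for all $i$). $\gamma$-decomposition: for $F\in\mathscr{F}_2$, $i\in[F]$, $s\in\mathcal{S}$, the symbols $s'$ with $f_i(s')\prec f_i(s)$ have pairwise distinct codewords; list them together with $s$ as $s_1,\dots,s_\rho$ with $s_\rho=s$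 and $f_i(s_1)\prec\cdots\prec f_i(s_\rho)$; set $\gamma(s_1)=f_i(s_1)$ and $f_i(s_r)=f_i(s_{r-1})\gamma(s_r)$ for $r\ge2$. The code-tuple $\ddot{F}$: $\ddot{\tau}_i=\tau_i$ and $\ddot{f}_i(s)=\ddot{\gamma}(s_1)\cdots\ddot{\gamma}(s_\rho)$ where, writing $\gamma(s_r)=g_1g_2\cdots g_l$: $\ddot{\gamma}(s_r)=\gamma(s_r)$ if $r=1$ and $|\mathcal{P}^2_{F,i}|=4$; $\ddot{\gamma}(s_r)=1$ if $r=1$, $|\mathcal{P}^2_{F,i}|=3$, $|\gamma(s_r)|=1$; $\ddot{\gamma}(s_r)=01g_3\cdots g_l$ if $r=1$, $|\mathcal{P}^2_{F,i}|=3$, $|\gamma(s_r)|\ge2$, $g_1\bar{g_2}\notin\mathcal{P}^2_{F,i}$; $\ddot{\gamma}(s_r)=1g_2g_3\cdots g_l$ if $r=1$, $|\mathcal{P}^2_{F,i}|=3$, $|\gamma(s_r)|\ge2$, $g_1\bar{g_2}\in\mathcal{P}^2_{F,i}$; $\ddot{\gamma}(s_r)=00g_3\cdots g_l$ if $r\ge2$. *)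

theory Defs
  imports Complex_Main "HOL-Library.Sublist"
begin

text \<open>Code symbols: False = 0, True = 1. A code-tuple F with m tables is given by
  m, f :: nat => 'a => bool list (f i = f_i) and tau :: nat => 'a => nat (tau i = tau_i);
  only indices i < m are relevant.\<close>

definition code_tuple :: "nat \<Rightarrow> (nat \<Rightarrow> 'a \<Rightarrow> nat) \<Rightarrow> bool" where
  "code_tuple m \<tau> \<longleftrightarrow> m \<ge> 1 \<and> (\<forall>i<m. \<forall>s. \<tau> i s < m)"

fun fstar :: "(nat \<Rightarrow> 'a \<Rightarrow> bool list) \<Rightarrow> (nat \<Rightarrow> 'a \<Rightarrow> nat) \<Rightarrow> nat \<Rightarrow> 'a list \<Rightarrow> bool list" where
  "fstar f \<tau> i [] = []"
| "fstar f \<tau> i (x # xs) = f i x @ fstar f \<tau> (\<tau> i x) xs"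

definition Pk :: "(nat \<Rightarrow> 'a \<Rightarrow> bool list) \<Rightarrow> (nat \<Rightarrow> 'a \<Rightarrow> nat) \<Rightarrow> nat \<Rightarrow> nat \<Rightarrow> bool list \<Rightarrow> bool list set" where
  "Pk f \<tau> k i b = {c. length c = k \<and> (\<exists>xs. xs \<noteq> [] \<and> prefix (b @ c) (fstar f \<tau> i xs) \<and> prefix b (f i (hd xs)))}"

definition Pbar :: "(nat \<Rightarrow> 'a \<Rightarrow> bool list) \<Rightarrow> (nat \<Rightarrow> 'a \<Rightarrow> nat) \<Rightarrow> nat \<Rightarrow> nat \<Rightarrow> bool list \<Rightarrow> bool list set" where
  "Pbar f \<tau> k i b = {c. length c = k \<and> (\<exists>xs. xs \<noteq> [] \<and> prefix (b @ c) (fstar f \<tau> i xs) \<and> strict_prefix b (f i (hd xs)))}"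

definition dec2 :: "nat \<Rightarrow> (nat \<Rightarrow> 'a \<Rightarrow> bool list) \<Rightarrow> (nat \<Rightarrow> 'a \<Rightarrow> nat) \<Rightarrow> bool" where
  "dec2 m f \<tau> \<longleftrightarrow> (\<forall>i<m.
      (\<forall>s. Pk f \<tau> 2 (\<tau> i s) [] \<inter> Pbar f \<tau> 2 i (f i s) = {}) \<and>
      (\<forall>s s'. s \<noteq> s' \<and> f i s = f i s' \<longrightarrow> Pk f \<tau> 2 (\<tau> i s) [] \<inter> Pk f \<tau> 2 (\<tau> i s') [] = {}))"

definition valid_mu :: "('a::finite \<Rightarrow> real) \<Rightarrow> bool" where
  "valid_mu \<mu> \<longleftrightarrow> (\<forall>s. 0 < \<mu> s \<and> \<mu> s \<le> 1) \<and> (\<Sum>s\<in>UNIV. \<mu> s) = 1"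

definition Qmat :: "('a::finite \<Rightarrow> real) \<Rightarrow> (nat \<Rightarrow> 'a \<Rightarrow> nat) \<Rightarrow> nat \<Rightarrow> nat \<Rightarrow> real" where
  "Qmat \<mu> \<tau> i j = (\<Sum>s\<in>{s. \<tau> i s = j}. \<mu> s)"

text \<open>Regularity: pi Q = pi, sum pi = 1 has a unique solution pi in R^m
  (vectors represented as nat => real, zero outside [F]).\<close>
definition regular :: "('a::finite \<Rightarrow> real) \<Rightarrow> nat \<Rightarrow> (nat \<Rightarrow> 'a \<Rightarrow> nat) \<Rightarrow> bool" where
  "regular \<mu> m \<tau> \<longleftrightarrow> (\<exists>!\<pi>::nat \<Rightarrow> real. (\<forall>j\<ge>m. \<pi> j = 0) \<and>
      (\<forall>j<m. (\<Sum>i<m. \<pi> i * Qmat \<mu> \<tau> i j) = \<pi> j) \<and> (\<Sum>i<m. \<pi> i) = 1)"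

definition F2 :: "('a::finite \<Rightarrow> real) \<Rightarrow> nat \<Rightarrow> (nat \<Rightarrow> 'a \<Rightarrow> bool list) \<Rightarrow> (nat \<Rightarrow> 'a \<Rightarrow> nat) \<Rightarrow> bool" where
  "F2 \<mu> m f \<tau> \<longleftrightarrow> code_tuple m \<tau> \<and> regular \<mu> m \<tau> \<and> dec2 m f \<tau> \<and>
     (\<forall>i<m. card (Pk f \<tau> 2 i []) \<ge> 3)"

definition gdecomp :: "(nat \<Rightarrow> 'a \<Rightarrow> bool list) \<Rightarrow> nat \<Rightarrow> 'a \<Rightarrow> 'a list \<Rightarrow> bool" where
  "gdecomp f i s ss \<longleftrightarrow> ss \<noteq> [] \<and> last ss = s \<and>
     set ss = insert s {s'. strict_prefix (f i s') (f i s)} \<and>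
     sorted_wrt (\<lambda>a b. strict_prefix (f i a) (f i b)) ss"

text \<open>gamma(s_{r+1}) (0-based index r) from the codeword list ws = [f_i(s_1),...,f_i(s_rho)].\<close>
definition gamma :: "bool list list \<Rightarrow> nat \<Rightarrow> bool list" where
  "gamma ws r = (if r = 0 then ws ! 0 else drop (length (ws ! (r - 1))) (ws ! r))"

text \<open>ddot-gamma (0-based index r). Cases not covered by the paper
  (gamma(s_1) empty, or |P^2| not in {3,4}) default to gamma itself.\<close>
definition ddgamma :: "(nat \<Rightarrow> 'a \<Rightarrow> bool list) \<Rightarrow> (nat \<Rightarrow> 'a \<Rightarrow> nat) \<Rightarrow> nat \<Rightarrow> bool list list \<Rightarrow> nat \<Rightarrow> bool list" where
  "ddgamma f \<tau> i ws r = (let g = gamma ws r in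
     if r = 0 then
       (if card (Pk f \<tau> 2 i []) = 4 then g
        else if card (Pk f \<tau> 2 i []) = 3 then
          (if length g = 1 then [True]
           else if length g \<ge> 2 then
             (if [g ! 0, \<not> (g ! 1)] \<notin> Pk f \<tau> 2 i [] then [False, True] @ drop 2 g
              else True # tl g)
           else g)
        else g)
     else [False, False] @ drop 2 g)"

definition ddf :: "(nat \<Rightarrow> 'a \<Rightarrow> bool list) \<Rightarrow> (nat \<Rightarrow> 'a \<Rightarrow> nat) \<Rightarrow> nat \<Rightarrow> 'a \<Rightarrow> bool list" where
  "ddf f \<tau> i s = (let ws = map (f i) (SOME ss. gdecomp f i s ss) in
     concat (map (ddgamma f \<tau> i ws) [0..<length ws]))"

end

theory Submission
  imports Defs
begin


abbreviation S2 :: "bool list set" where "S2 \<equiv> {c. length c = 2}"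

lemma S2_eq: "S2 = {[False,False],[False,True],[True,False],[True,True]}"
proof -
  have "length c = 2 \<Longrightarrow> c \<in> {[False,False],[False,True],[True,False],[True,True]}" for c
    by (cases c; simp; rename_tac a l; case_tac l; auto)
  then show ?thesis by auto
qed

lemma S2_card: "card S2 = 4" and S2_fin: "finite S2"
  unfolding S2_eq by auto

lemma card3_hit:
  assumes "A \<subseteq> S2" "card A \<ge> 3" "c1 \<noteq> c2" "c1 \<in> S2" "c2 \<in> S2"
  shows "c1 \<in> A \<or> c2 \<in> A"
proof (rule ccontr)
  assume "\<not> ?thesis"
  then have "A \<subseteq> S2 - {c1,c2}" using assms by auto
  moreover have "card (S2 - {c1,c2}) = 2" using assms S2_card S2_fin
    by (simp add: card_Diff_subset)
  ultimately have "card A \<le> 2" by (metis card_mono S2_fin finite_Diff)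
  then show False using assms by simp
qed

lemma Pk_sub: "Pk f \<tau> 2 j b \<subseteq> S2" unfolding Pk_def by auto
lemma Pbar_sub: "Pbar f \<tau> 2 j b \<subseteq> S2" unfolding Pbar_def by auto

lemma sorted_wrt_unique:
  assumes "sorted_wrt R xs" "sorted_wrt R ys" "set xs = set ys"
    "\<And>a. \<not> R a a" "\<And>a b. R a b \<Longrightarrow> \<not> R b a"
  shows "xs = ys"
  using assms(1-3)
proof (induction xs arbitrary: ys)
  case Nil then show ?case by simp
next
  case (Cons x xs)
  then obtain y ys' where ys: "ys = y # ys'" by (cases ys) auto
  have xy: "x = y"
  proof (rule ccontr)
    assume "x \<noteq> y"
    then have "y \<in> set xs" "x \<in> set ys'" using Cons.prems ys by auto
    then have "R x y" "R y x" using Cons.prems ys by auto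
    then show False using assms(5) by blast
  qed
  have "x \<notin> set xs" using Cons.prems assms(4) by auto
  moreover have "x \<notin> set ys'" using Cons.prems assms(4) ys xy by auto
  ultimately have "set xs = set ys'" using Cons.prems ys xy by auto
  then show ?case using Cons ys xy by auto
qed

lemma filter_takeWhile:
  assumes "sorted_wrt R xs" "\<And>x y. R y x \<Longrightarrow> P x \<Longrightarrow> P y"
  shows "filter P xs = takeWhile P xs"
  using assms(1)
proof (induction xs)
  case Nil then show ?case by simp
next
  case (Cons x xs)
  show ?case
  proof (cases "P x")
    case True then show ?thesis using Cons by auto
  next
    case False
    then have "\<forall>y\<in>set xs. \<not> P y" using Cons.prems assms(2) by auto
    then show ?thesis using False by simp
  qed
qed

lemma last_sorted:
  assumes "sorted_wrt R xs" "x \<in> set xs" "\<And>y. y \<in> set xs \<Longrightarrow> y \<noteq> x \<Longrightarrow> R y x"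
    "\<And>a b. R a b \<Longrightarrow> \<not> R b a"
  shows "last xs = x"
proof (rule ccontr)
  assume ne: "last xs \<noteq> x"
  have "xs \<noteq> []" using assms by auto
  then have xs: "xs = butlast xs @ [last xs]" by simp
  then have "x \<in> set (butlast xs)" using assms(2) ne by (metis rotate1.simps(2) set_ConsD set_rotate1)
  then have "R x (last xs)" using assms(1) xs by (metis sorted_wrt_append list.set_intros(1))
  moreover have "R (last xs) x" using assms(3) ne \<open>xs \<noteq> []\<close> by auto
  ultimately show False using assms(4) by blast
qed

lemma par_app: "x \<parallel> y \<Longrightarrow> (p @ x) \<parallel> (p @ y)"
  by (simp add: parallel_def)



context
  fixes m :: nat and f :: "nat \<Rightarrow> 'a::finite \<Rightarrow> bool list" and \<tau> :: "nat \<Rightarrow> 'a \<Rightarrow> nat"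
  assumes ct: "code_tuple m \<tau>" and d2: "dec2 m f \<tau>" and c3: "\<forall>j<m. 3 \<le> card (Pk f \<tau> 2 j [])"
begin

lemma tau_lt: "i < m \<Longrightarrow> \<tau> i s < m" using ct unfolding code_tuple_def by auto

lemma first_bit:
  assumes "j < m"
  shows "\<exists>ys. ys \<noteq> [] \<and> prefix [b] (fstar f \<tau> j ys)"
proof -
  have "[b,False] \<in> Pk f \<tau> 2 j [] \<or> [b,True] \<in> Pk f \<tau> 2 j []"
    using card3_hit[OF Pk_sub, of f \<tau> j "[]" "[b,False]" "[b,True]"] c3 assms by simp
  then obtain c where "[b,c] \<in> Pk f \<tau> 2 j []" by blast
  then obtain ys where "ys \<noteq> []" "prefix [b,c] (fstar f \<tau> j ys)" unfolding Pk_def by auto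
  moreover have "prefix [b] [b,c]" by simp
  ultimately show ?thesis using prefix_order.trans by blast
qed

lemma Pbar_two:
  assumes "i < m" "c1 \<noteq> c2" "c1 \<in> Pbar f \<tau> 2 i (f i u)" "c2 \<in> Pbar f \<tau> 2 i (f i u)"
  shows False
proof -
  have lt: "\<tau> i u < m" by (rule tau_lt[OF assms(1)])
  have "c1 \<in> Pk f \<tau> 2 (\<tau> i u) [] \<or> c2 \<in> Pk f \<tau> 2 (\<tau> i u) []"
    using card3_hit[OF Pk_sub, of f \<tau> "\<tau> i u" "[]" c1 c2] c3 lt assms Pbar_sub by blast
  moreover have "Pk f \<tau> 2 (\<tau> i u) [] \<inter> Pbar f \<tau> 2 i (f i u) = {}"
    using d2 assms(1) unfolding dec2_def by simp
  ultimately show False using assms by blast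
qed

lemma f_inj:
  assumes "i < m" "f i a = f i b" shows "a = b"
proof (rule ccontr)
  assume ab: "a \<noteq> b"
  let ?A = "Pk f \<tau> 2 (\<tau> i a) []" and ?B = "Pk f \<tau> 2 (\<tau> i b) []"
  have "\<forall>s s'. s \<noteq> s' \<and> f i s = f i s' \<longrightarrow> Pk f \<tau> 2 (\<tau> i s) [] \<inter> Pk f \<tau> 2 (\<tau> i s') [] = {}"
    using d2 assms(1) unfolding dec2_def by simp
  then have dis: "?A \<inter> ?B = {}" using assms(2) ab by simp
  have "card ?A \<ge> 3" "card ?B \<ge> 3" using c3 tau_lt[OF assms(1)] by blast+
  have fin: "finite ?A" "finite ?B" by (rule finite_subset[OF Pk_sub S2_fin])+
  have "card (?A \<union> ?B) = card ?A + card ?B" using card_Un_disjoint[OF fin dis] .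
  moreover have "?A \<union> ?B \<subseteq> S2" using Pk_sub by blast
  then have "card (?A \<union> ?B) \<le> card S2" by (rule card_mono[OF S2_fin])
  then have "card (?A \<union> ?B) \<le> 4" unfolding S2_card .
  ultimately show False using \<open>card ?A \<ge> 3\<close> \<open>card ?B \<ge> 3\<close> by simp
qed

lemma gap2:
  assumes "i < m" "strict_prefix (f i u) (f i t)"
  shows "length (f i t) \<ge> length (f i u) + 2"
proof (rule ccontr)
  assume "\<not> ?thesis"
  moreover have "length (f i t) > length (f i u)" using assms prefix_length_less by blast
  ultimately have "length (f i t) = length (f i u) + 1" by simp
  moreover obtain z where z: "f i t = f i u @ z" using assms by (auto simp: strict_prefix_def prefix_def)
  ultimately have "length z = 1" by simp
  then obtain a where "z = [a]" by (metis One_nat_def length_0_conv length_Suc_conv)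
  then have ft: "f i t = f i u @ [a]" using z by simp
  have "[a,b] \<in> Pbar f \<tau> 2 i (f i u)" for b
  proof -
    obtain ys where "ys \<noteq> []" "prefix [b] (fstar f \<tau> (\<tau> i t) ys)"
      using first_bit tau_lt assms by blast
    then have "prefix (f i u @ [a,b]) (fstar f \<tau> i (t # ys))" using ft by simp
    then show ?thesis unfolding Pbar_def using assms(2) by (auto intro!: exI[of _ "t # ys"])
  qed
  then have "[a,False] \<in> Pbar f \<tau> 2 i (f i u)" "[a,True] \<in> Pbar f \<tau> 2 i (f i u)" by blast+
  then show False using Pbar_two[OF assms(1), of "[a,False]" "[a,True]"] by simp
qed

lemma agree2:
  assumes "i < m" "strict_prefix (f i u) (f i t)" "strict_prefix (f i u) (f i t')"
  shows "take 2 (drop (length (f i u)) (f i t)) = take 2 (drop (length (f i u)) (f i t'))"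
proof (rule ccontr)
  assume ne: "\<not> ?thesis"
  have mem: "take 2 (drop (length (f i u)) (f i x)) \<in> Pbar f \<tau> 2 i (f i u)"
    if hx: "strict_prefix (f i u) (f i x)" for x
  proof -
    have "length (f i x) \<ge> length (f i u) + 2" using gap2 assms(1) hx by blast
    moreover obtain z where z: "f i x = f i u @ z" using hx by (auto simp: strict_prefix_def prefix_def)
    ultimately have "length (take 2 z) = 2" by simp
    moreover have "prefix (f i u @ take 2 z) (fstar f \<tau> i [x])" using z
      by (simp add: take_is_prefix)
    ultimately show ?thesis unfolding Pbar_def using hx z by (auto intro!: exI[of _ "[x]"])
  qed
  show False using Pbar_two[OF assms(1) ne mem[OF assms(2)] mem[OF assms(3)]] .
qed

lemma Pk_code2:
  assumes "i < m" "length (f i t) \<ge> 2"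
  shows "take 2 (f i t) \<in> Pk f \<tau> 2 i []"
  unfolding Pk_def using assms by (auto intro!: exI[of _ "[t]"] simp: take_is_prefix)

lemma Pk_code1:
  assumes "i < m" "f i t = [a]"
  shows "[a,b] \<in> Pk f \<tau> 2 i []"
proof -
  obtain ys where "ys \<noteq> []" "prefix [b] (fstar f \<tau> (\<tau> i t) ys)"
    using first_bit tau_lt assms by blast
  then show ?thesis unfolding Pk_def using assms by (auto intro!: exI[of _ "t # ys"])
qed

end


definition phi :: "bool list set \<Rightarrow> bool list \<Rightarrow> bool list" where
  "phi P g = (if card P = 4 then g
        else if card P = 3 then
          (if length g = 1 then [True]
           else if length g \<ge> 2 then
             (if [g ! 0, \<not> (g ! 1)] \<notin> P then [False, True] @ drop 2 g
              else True # tl g)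
           else g)
        else g)"

lemma ddgamma0: "ddgamma f \<tau> i ws 0 = phi (Pk f \<tau> 2 i []) (ws ! 0)"
  unfolding ddgamma_def gamma_def Let_def phi_def by simp

definition condP :: "bool list set \<Rightarrow> bool list \<Rightarrow> bool" where
  "condP P g \<longleftrightarrow> (length g \<ge> 2 \<longrightarrow> take 2 g \<in> P) \<and> (length g = 1 \<longrightarrow> (\<forall>b. [g!0,b] \<in> P))"

lemma S2_minus1:
  assumes "P \<subseteq> S2" "card P = 3"
  obtains m0 m1 where "P = S2 - {[m0,m1]}"
proof -
  have "card (S2 - P) = 1" using assms S2_card S2_fin by (simp add: card_Diff_subset finite_subset)
  then obtain mm where mm: "S2 - P = {mm}" by (rule card_1_singletonE)
  then have "mm \<in> S2" by blast
  then obtain m0 m1 where "mm = [m0,m1]" unfolding S2_eq by blast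
  moreover have "P = S2 - {mm}" using mm assms(1) by blast
  ultimately show ?thesis using that by blast
qed

lemma phi_par:
  assumes "P \<subseteq> S2" "card P \<ge> 3" "g \<parallel> g'" "condP P g" "condP P g'"
  shows "phi P g \<parallel> phi P g'"
proof -
  have "card P \<le> 4" using card_mono[OF S2_fin assms(1)] S2_card by simp
  then consider "card P = 4" | "card P = 3" using assms(2) by linarith
  then show ?thesis
  proof cases
    case 1 then show ?thesis using assms by (simp add: phi_def)
  next
    case 2
    then obtain m0 m1 where P0: "P = S2 - {[m0,m1]}" using S2_minus1 assms(1) by blast
    then have P: "\<And>x. x \<in> P \<longleftrightarrow> length x = 2 \<and> x \<noteq> [m0,m1]" by blast
    have ne: "g \<noteq> []" "g' \<noteq> []" using assms(3) by auto
    show ?thesis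
    proof (cases g)
      case Nil then show ?thesis using ne by simp
    next
      case (Cons a x)
      note g = this
      show ?thesis
      proof (cases g')
        case Nil then show ?thesis using ne by simp
      next
        case (Cons a' x')
        note g' = this
        show ?thesis
        proof (cases x)
          case Nil
          show ?thesis
          proof (cases x')
            case Nil
            then show ?thesis using g g' \<open>x = []\<close> assms(3,4,5) P 2
              by (cases a; cases a'; cases m0; cases m1; auto simp add: phi_def condP_def parallel_def)
          next
            case (Cons b' y')
            then show ?thesis using g g' \<open>x = []\<close> assms(3,4,5) P 2
              by (cases a; cases a'; cases b'; cases m0; cases m1; auto simp add: phi_def condP_def parallel_def)
          qed
        next
          case (Cons b y)
          show ?thesis
          proof (cases x')
            case Nil
            then show ?thesis using g g' \<open>x = b # y\<close> assms(3,4,5) P 2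
              by (cases a; cases a'; cases b; cases m0; cases m1; auto simp add: phi_def condP_def parallel_def)
          next
            case (Cons b' y')
            then show ?thesis using g g' \<open>x = b # y\<close> assms(3,4,5) P 2
              by (cases a; cases a'; cases b; cases b'; cases m0; cases m1; auto simp add: phi_def condP_def parallel_def)
          qed
        qed
      qed
    qed
  qed
qed

lemma gamma_app: "r < length A \<Longrightarrow> gamma (A @ B) r = gamma A r"
  unfolding gamma_def by (cases r) (auto simp: nth_append)

lemma ddgamma_app: "r < length A \<Longrightarrow> ddgamma f \<tau> i (A @ B) r = ddgamma f \<tau> i A r"
  unfolding ddgamma_def by (simp add: gamma_app)

lemma telescope:
  assumes "\<forall>r. Suc r < length ws \<longrightarrow> prefix (ws!r) (ws!Suc r)"
  shows "n < length ws \<Longrightarrow> concat (map (gamma ws) [0..<Suc n]) = ws!n"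
proof (induction n)
  case 0 then show ?case by (simp add: gamma_def)
next
  case (Suc n)
  have "concat (map (gamma ws) [0..<Suc (Suc n)]) = concat (map (gamma ws) [0..<Suc n]) @ gamma ws (Suc n)"
    by simp
  also have "\<dots> = ws!n @ drop (length (ws!n)) (ws!Suc n)"
  proof -
    have "concat (map (gamma ws) [0..<Suc n]) = ws!n" using Suc by simp
    moreover have "gamma ws (Suc n) = drop (length (ws!n)) (ws!Suc n)" by (simp add: gamma_def)
    ultimately show ?thesis by simp
  qed
  finally have "concat (map (gamma ws) [0..<Suc (Suc n)]) = ws!n @ drop (length (ws!n)) (ws!Suc n)" .
  also have "\<dots> = ws ! Suc n" using assms Suc.prems
    by (metis append_take_drop_id prefix_def take_append append_eq_conv_conj)
  finally show ?case .
qed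

lemma ddlen:
  assumes "\<forall>r. 0 < r \<longrightarrow> r < length ws \<longrightarrow> length (gamma ws r) \<ge> 2" "r < length ws"
  shows "length (ddgamma f \<tau> i ws r) = length (gamma ws r)"
proof (cases "r = 0")
  case True then show ?thesis unfolding ddgamma_def Let_def by (auto simp: Suc_le_eq)
next
  case False
  then have "length (gamma ws r) \<ge> 2" using assms by auto
  then show ?thesis using False unfolding ddgamma_def Let_def by simp
qed



lemma par_cancel: "(p @ x) \<parallel> (p @ y) \<Longrightarrow> x \<parallel> y"
  by (simp add: parallel_def)

lemma prefix_split_par:
  assumes "prefix x (p @ b # bs)" "\<not> prefix x p"
  shows "prefix (p @ [b]) x"
proof -
  obtain us where us: "x = p @ us" "prefix us (b # bs)" using assms prefix_append by blast
  then have "us \<noteq> []" using assms(2) by auto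
  then obtain vs where "us = b # vs" using us(2) by (cases us) auto
  then show ?thesis using us by simp
qed

lemma par_of_prefixes:
  assumes "prefix (p @ [b]) x" "prefix (p @ [c]) y" "b \<noteq> c"
  shows "x \<parallel> y"
proof -
  obtain x' y' where "x = p @ b # x'" "y = p @ c # y'" using assms by (auto simp: prefix_def)
  then show ?thesis using assms(3) par_app Cons_parallelI1 by metis
qed

lemma ddf_split:
  "concat (map (ddgamma f \<tau> i (A@B)) [0..<length (A@B)]) =
   concat (map (ddgamma f \<tau> i A) [0..<length A]) @ concat (map (ddgamma f \<tau> i (A@B)) [length A..<length (A@B)])"
proof -
  have e1: "[0..<length (A@B)] = [0..<length A] @ [length A..<length (A@B)]"
    by (simp add: upt_add_eq_append[of 0 "length A" "length B", simplified])
  have e2: "map (ddgamma f \<tau> i (A@B)) [0..<length A] = map (ddgamma f \<tau> i A) [0..<length A]"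
    by (rule map_cong) (auto simp: ddgamma_app)
  show ?thesis by (subst e1) (simp only: map_append concat_append e2)
qed

context
  fixes m :: nat and f :: "nat \<Rightarrow> 'a::finite \<Rightarrow> bool list" and \<tau> :: "nat \<Rightarrow> 'a \<Rightarrow> nat"
  assumes ct: "code_tuple m \<tau>" and d2: "dec2 m f \<tau>" and c3: "\<forall>j<m. 3 \<le> card (Pk f \<tau> 2 j [])"
begin

lemma gd_exists:
  assumes "i < m" shows "\<exists>ss. gdecomp f i s ss"
proof -
  define A where "A = insert s {s'. strict_prefix (f i s') (f i s)}"
  have pre: "prefix (f i x) (f i s)" if "x \<in> A" for x
    using that unfolding A_def by auto
  have inj: "inj_on (\<lambda>x. length (f i x)) A"
  proof (rule inj_onI)
    fix a b assume ab: "a \<in> A" "b \<in> A" "length (f i a) = length (f i b)"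
    then have "prefix (f i a) (f i b)" using pre prefix_length_prefix by (metis order_refl)
    then have "f i a = f i b" using ab(3) prefix_length_less
      by (metis prefix_order.le_less less_irrefl)
    then show "a = b" using f_inj[OF ct d2 c3 assms] by blast
  qed
  define ns where "ns = sorted_list_of_set ((\<lambda>x. length (f i x)) ` A)"
  define ss where "ss = map (inv_into A (\<lambda>x. length (f i x))) ns"
  have fin: "finite A" by simp
  have setns: "set ns = (\<lambda>x. length (f i x)) ` A" unfolding ns_def using fin by simp
  have set: "set ss = A" unfolding ss_def set_map setns using inj by simp
  have mk: "map (\<lambda>x. length (f i x)) ss = ns" unfolding ss_def
    unfolding map_map comp_def setns
  proof (rule map_idI)
    fix x assume "x \<in> set ns"
    then have "x \<in> (\<lambda>x. length (f i x)) ` A" using setns by simp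
    from f_inv_into_f[OF this] show "length (f i (inv_into A (\<lambda>x. length (f i x)) x)) = x" by simp
  qed
  have "sorted_wrt (<) ns" unfolding ns_def by (rule strict_sorted_list_of_set)
  then have "sorted_wrt (<) (map (\<lambda>x. length (f i x)) ss)" using mk by simp
  then have "sorted_wrt (\<lambda>a b. length (f i a) < length (f i b)) ss" by (simp add: sorted_wrt_map)
  then have srt: "sorted_wrt (\<lambda>a b. strict_prefix (f i a) (f i b)) ss"
  proof (rule sorted_wrt_mono_rel[rotated])
    fix a b assume "a \<in> set ss" "b \<in> set ss" "length (f i a) < length (f i b)"
    then show "strict_prefix (f i a) (f i b)" using pre set prefix_length_prefix
      by (metis less_imp_le_nat less_not_refl strict_prefix_def)
  qed
  have sin: "s \<in> set ss" using set A_def by auto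
  have "last ss = s"
  proof (rule last_sorted[OF srt sin])
    fix y assume "y \<in> set ss" "y \<noteq> s"
    then show "strict_prefix (f i y) (f i s)" using set A_def by auto
  next
    fix a b assume "strict_prefix (f i a) (f i b)" then show "\<not> strict_prefix (f i b) (f i a)"
      by (meson prefix_order.less_asym)
  qed
  then have "gdecomp f i s ss" unfolding gdecomp_def using srt sin set A_def by auto
  then show ?thesis by blast
qed

end


lemma sp_asym: "strict_prefix a b \<Longrightarrow> \<not> strict_prefix b a"
  by (meson prefix_order.less_asym)

context
  fixes m :: nat and f :: "nat \<Rightarrow> 'a::finite \<Rightarrow> bool list" and \<tau> :: "nat \<Rightarrow> 'a \<Rightarrow> nat"
  assumes ct: "code_tuple m \<tau>" and d2: "dec2 m f \<tau>" and c3: "\<forall>j<m. 3 \<le> card (Pk f \<tau> 2 j [])"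
begin

lemma gd_unique:
  assumes "gdecomp f i s ss" "gdecomp f i s ss'" shows "ss = ss'"
  using assms unfolding gdecomp_def
  by (intro sorted_wrt_unique[of "\<lambda>a b. strict_prefix (f i a) (f i b)"]) (auto dest: sp_asym)

lemma gd_some: "i < m \<Longrightarrow> gdecomp f i s (SOME ss. gdecomp f i s ss)"
  using someI_ex[OF gd_exists[OF ct d2 c3]] by blast

lemma ddf_eq:
  assumes "i < m" "gdecomp f i s ss"
  shows "ddf f \<tau> i s = concat (map (ddgamma f \<tau> i (map (f i) ss)) [0..<length ss])"
proof -
  have "(SOME ss. gdecomp f i s ss) = ss" using gd_unique gd_some assms by blast
  then show ?thesis unfolding ddf_def Let_def by simp
qed

lemma gamma2:
  assumes "i < m" "sorted_wrt (\<lambda>a b. strict_prefix (f i a) (f i b)) ss"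
  shows "\<forall>r. 0 < r \<longrightarrow> r < length (map (f i) ss) \<longrightarrow> length (gamma (map (f i) ss) r) \<ge> 2"
proof (intro allI impI)
  fix r assume r: "0 < r" "r < length (map (f i) ss)"
  then have "strict_prefix (f i (ss!(r-1))) (f i (ss!r))"
    using sorted_wrt_nth_less[OF assms(2), of "r-1" r] by simp
  then have "length (f i (ss!r)) \<ge> length (f i (ss!(r-1))) + 2"
    using gap2[OF ct d2 c3 assms(1)] by blast
  then show "length (gamma (map (f i) ss) r) \<ge> 2" using r unfolding gamma_def by simp
qed

lemma part1:
  assumes "i < m" "gdecomp f i s ss" "r < length ss"
  shows "length (ddgamma f \<tau> i (map (f i) ss) r) = length (gamma (map (f i) ss) r)"
proof -
  have srt: "sorted_wrt (\<lambda>a b. strict_prefix (f i a) (f i b)) ss" using assms(2) unfolding gdecomp_def by simp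
  show ?thesis using ddlen[OF gamma2[OF assms(1) srt]] assms(3) by simp
qed

lemma part2:
  assumes "i < m"
  shows "length (ddf f \<tau> i s) = length (f i s)"
proof -
  define ss where "ss = (SOME ss. gdecomp f i s ss)"
  have gd: "gdecomp f i s ss" unfolding ss_def by (rule gd_some[OF assms])
  define ws where "ws = map (f i) ss"
  have srt: "sorted_wrt (\<lambda>a b. strict_prefix (f i a) (f i b)) ss" using gd unfolding gdecomp_def by simp
  have ne: "ss \<noteq> []" using gd unfolding gdecomp_def by simp
  have "length (ddf f \<tau> i s) = sum_list (map length (map (ddgamma f \<tau> i ws) [0..<length ss]))"
    using ddf_eq[OF assms gd] unfolding ws_def by (simp add: length_concat)
  also have "map length (map (ddgamma f \<tau> i ws) [0..<length ss]) = map length (map (gamma ws) [0..<length ss])"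
    unfolding map_map by (rule map_cong) (auto simp: ws_def part1[OF assms gd])
  also have "sum_list \<dots> = length (concat (map (gamma ws) [0..<Suc (length ss - 1)]))"
    using ne by (simp add: length_concat)
  also have "concat (map (gamma ws) [0..<Suc (length ss - 1)]) = ws ! (length ss - 1)"
  proof (rule telescope)
    show "\<forall>r. Suc r < length ws \<longrightarrow> prefix (ws ! r) (ws ! Suc r)"
    proof (intro allI impI)
      fix r assume "Suc r < length ws"
      then have "strict_prefix (f i (ss!r)) (f i (ss!Suc r))"
        using sorted_wrt_nth_less[OF srt, of r "Suc r"] unfolding ws_def by simp
      then show "prefix (ws ! r) (ws ! Suc r)" using \<open>Suc r < length ws\<close> unfolding ws_def
        by (simp add: prefix_order.less_imp_le)
    qed
    show "length ss - 1 < length ws" using ne unfolding ws_def by simp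
  qed
  also have "\<dots> = f i (last ss)" unfolding ws_def using ne by (simp add: last_conv_nth)
  also have "last ss = s" using gd unfolding gdecomp_def by simp
  finally show ?thesis .
qed

lemma part3_fwd:
  assumes "i < m" "prefix (f i s) (f i s')"
  shows "prefix (ddf f \<tau> i s) (ddf f \<tau> i s')"
proof -
  define ss' where "ss' = (SOME ss. gdecomp f i s' ss)"
  have gd': "gdecomp f i s' ss'" unfolding ss'_def by (rule gd_some[OF assms(1)])
  have srt': "sorted_wrt (\<lambda>a b. strict_prefix (f i a) (f i b)) ss'" using gd' unfolding gdecomp_def by simp
  define P where "P x = prefix (f i x) (f i s)" for x
  have tw: "filter P ss' = takeWhile P ss'"
  proof (rule filter_takeWhile[OF srt'])
    fix x y assume "strict_prefix (f i y) (f i x)" "P x"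
    then show "P y" unfolding P_def by (meson prefix_order.less_imp_le prefix_order.trans)
  qed
  have sin: "s \<in> set ss'"
  proof (cases "f i s = f i s'")
    case True then have "s = s'" using f_inj[OF ct d2 c3 assms(1)] by blast
    then show ?thesis using gd' unfolding gdecomp_def by auto
  next
    case False then have "strict_prefix (f i s) (f i s')" using assms(2) by (simp add: strict_prefix_def)
    then show ?thesis using gd' unfolding gdecomp_def by auto
  qed
  have setf: "set (filter P ss') = insert s {x. strict_prefix (f i x) (f i s)}"
  proof
    show "set (filter P ss') \<subseteq> insert s {x. strict_prefix (f i x) (f i s)}"
    proof
      fix x assume "x \<in> set (filter P ss')"
      then have "prefix (f i x) (f i s)" unfolding P_def by simp
      then have "f i x = f i s \<or> strict_prefix (f i x) (f i s)" by (simp add: strict_prefix_def)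
      then show "x \<in> insert s {x. strict_prefix (f i x) (f i s)}"
        using f_inj[OF ct d2 c3 assms(1)] by blast
    qed
  next
    show "insert s {x. strict_prefix (f i x) (f i s)} \<subseteq> set (filter P ss')"
    proof
      fix x assume x: "x \<in> insert s {x. strict_prefix (f i x) (f i s)}"
      show "x \<in> set (filter P ss')"
      proof (cases "x = s")
        case True then show ?thesis using sin unfolding P_def by simp
      next
        case False
        then have sp: "strict_prefix (f i x) (f i s)" using x by simp
        then have "strict_prefix (f i x) (f i s')" using assms(2) prefix_order.less_le_trans by blast
        then have "x \<in> set ss'" using gd' unfolding gdecomp_def by auto
        then show ?thesis using sp unfolding P_def by (simp add: prefix_order.less_imp_le)
      qed
    qed
  qed
  have gdf: "gdecomp f i s (filter P ss')"
  proof -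
    have srtf: "sorted_wrt (\<lambda>a b. strict_prefix (f i a) (f i b)) (filter P ss')"
      using srt' sorted_wrt_filter by blast
    have sinf: "s \<in> set (filter P ss')" using setf by simp
    have "last (filter P ss') = s"
    proof (rule last_sorted[OF srtf sinf])
      fix y assume "y \<in> set (filter P ss')" "y \<noteq> s"
      then show "strict_prefix (f i y) (f i s)" using setf by auto
    qed (rule sp_asym)
    moreover have "filter P ss' \<noteq> []" using sinf by (metis empty_iff list.set(1))
    ultimately show ?thesis unfolding gdecomp_def using srtf setf by blast
  qed
  define A where "A = map (f i) (takeWhile P ss')"
  define B where "B = map (f i) (dropWhile P ss')"
  have "ddf f \<tau> i s = concat (map (ddgamma f \<tau> i A) [0..<length A])"
    using ddf_eq[OF assms(1) gdf] unfolding tw A_def by simp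
  moreover have "ddf f \<tau> i s' = concat (map (ddgamma f \<tau> i (A @ B)) [0..<length (A @ B)])"
    using ddf_eq[OF assms(1) gd'] unfolding A_def B_def map_append[symmetric] takeWhile_dropWhile_id
    by simp
  ultimately show ?thesis using ddf_split by (metis prefixI)
qed

end


context
  fixes m :: nat and f :: "nat \<Rightarrow> 'a::finite \<Rightarrow> bool list" and \<tau> :: "nat \<Rightarrow> 'a \<Rightarrow> nat"
  assumes ct: "code_tuple m \<tau>" and d2: "dec2 m f \<tau>" and c3: "\<forall>j<m. 3 \<le> card (Pk f \<tau> 2 j [])"
begin

lemma condP_code:
  assumes "i < m" shows "condP (Pk f \<tau> 2 i []) (f i t)"
  unfolding condP_def
proof (intro conjI impI allI)
  assume "2 \<le> length (f i t)"
  then show "take 2 (f i t) \<in> Pk f \<tau> 2 i []" using Pk_code2[OF ct d2 c3 assms] by blast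
next
  fix b assume "length (f i t) = 1"
  then obtain a where "f i t = [a]" by (metis One_nat_def length_0_conv length_Suc_conv)
  then show "[f i t ! 0, b] \<in> Pk f \<tau> 2 i []" using Pk_code1[OF ct d2 c3 assms] by simp
qed

lemma key_par:
  assumes "i < m" "\<forall>u\<in>set L. strict_prefix (f i u) (f i t)" "\<forall>u\<in>set L. strict_prefix (f i u) (f i t')"
    "f i t \<parallel> f i t'"
  shows "ddgamma f \<tau> i (map (f i) L @ [f i t]) (length L) \<parallel> ddgamma f \<tau> i (map (f i) L @ [f i t']) (length L)"
proof (cases "L = []")
  case True
  have "phi (Pk f \<tau> 2 i []) (f i t) \<parallel> phi (Pk f \<tau> 2 i []) (f i t')"
    by (rule phi_par[OF Pk_sub _ assms(4) condP_code[OF assms(1)] condP_code[OF assms(1)]])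
       (use c3 assms(1) in blast)
  then show ?thesis using True by (simp add: ddgamma0)
next
  case False
  define u where "u = last L"
  have uL: "u \<in> set L" using False u_def by simp
  define n where "n = length (f i u)"
  have g: "gamma (map (f i) L @ [f i x]) (length L) = drop n (f i x)" for x
  proof -
    have "length L - 1 < length L" using False by simp
    then have "(map (f i) L @ [f i x]) ! (length L - 1) = f i u"
      using False unfolding u_def by (simp add: nth_append last_conv_nth)
    then show ?thesis using False unfolding gamma_def n_def by (simp add: nth_append)
  qed
  have dd: "ddgamma f \<tau> i (map (f i) L @ [f i x]) (length L) = [False, False] @ drop 2 (drop n (f i x))" for x
    using False unfolding ddgamma_def Let_def g by simp
  have sp: "strict_prefix (f i u) (f i t)" "strict_prefix (f i u) (f i t')" using assms uL by auto
  have ft: "f i t = f i u @ drop n (f i t)" "f i t' = f i u @ drop n (f i t')"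
    using sp unfolding n_def by (auto simp: strict_prefix_def prefix_def)
  have p1: "drop n (f i t) \<parallel> drop n (f i t')"
    using assms(4) ft par_cancel by metis
  have tk: "take 2 (drop n (f i t)) = take 2 (drop n (f i t'))"
    using agree2[OF ct d2 c3 assms(1) sp] unfolding n_def .
  have "drop 2 (drop n (f i t)) \<parallel> drop 2 (drop n (f i t'))"
    using p1 tk par_cancel append_take_drop_id by metis
  then show ?thesis unfolding dd by (rule par_app)
qed

lemma part3_bwd:
  assumes "i < m" "prefix (ddf f \<tau> i s) (ddf f \<tau> i s')"
  shows "prefix (f i s) (f i s')"
proof (rule ccontr)
  assume np: "\<not> prefix (f i s) (f i s')"
  show False
  proof (cases "strict_prefix (f i s') (f i s)")
    case True
    then have "length (f i s') < length (f i s)" by (rule prefix_length_less)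
    moreover have "length (ddf f \<tau> i s) \<le> length (ddf f \<tau> i s')" using assms(2) by (rule prefix_length_le)
    ultimately show False using part2[OF ct d2 c3 assms(1)] by simp
  next
    case False
    have "\<not> prefix (f i s') (f i s)"
    proof
      assume "prefix (f i s') (f i s)"
      with False have "f i s' = f i s" by (simp add: strict_prefix_def)
      with np show False by simp
    qed
    then have "f i s \<parallel> f i s'" by (rule parallelI[OF np])
    then obtain p b bs c cs where bc: "b \<noteq> c" "f i s = p @ b # bs" "f i s' = p @ c # cs"
      using parallel_decomp[OF \<open>f i s \<parallel> f i s'\<close>] by blast
    define Q where "Q x = prefix (f i x) p" for x
    define ss where "ss = (SOME ss. gdecomp f i s ss)"
    define ss' where "ss' = (SOME ss. gdecomp f i s' ss)"
    have gd: "gdecomp f i s ss" unfolding ss_def by (rule gd_some[OF ct d2 c3 assms(1)])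
    have gd': "gdecomp f i s' ss'" unfolding ss'_def by (rule gd_some[OF ct d2 c3 assms(1)])
    have srt: "sorted_wrt (\<lambda>a b. strict_prefix (f i a) (f i b)) ss" using gd unfolding gdecomp_def by simp
    have srt': "sorted_wrt (\<lambda>a b. strict_prefix (f i a) (f i b)) ss'" using gd' unfolding gdecomp_def by simp
    have down: "Q y" if "strict_prefix (f i y) (f i x)" "Q x" for x y
      using that unfolding Q_def by (meson prefix_order.less_imp_le prefix_order.trans)
    have twQ: "filter Q ss = takeWhile Q ss" by (rule filter_takeWhile[OF srt down])
    have twQ': "filter Q ss' = takeWhile Q ss'" by (rule filter_takeWhile[OF srt' down])
    have psp: "strict_prefix p (f i s)" "strict_prefix p (f i s')" using bc
      by (auto simp: strict_prefix_def)
    have setQ: "set (filter Q ss) = {x. Q x}"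
    proof -
      have "x \<in> set ss" if "Q x" for x
      proof -
        have "strict_prefix (f i x) (f i s)" using that psp unfolding Q_def
          using prefix_order.le_less_trans by blast
        then show ?thesis using gd unfolding gdecomp_def by auto
      qed
      then show ?thesis by auto
    qed
    have setQ': "set (filter Q ss') = {x. Q x}"
    proof -
      have "x \<in> set ss'" if "Q x" for x
      proof -
        have "strict_prefix (f i x) (f i s')" using that psp unfolding Q_def
          using prefix_order.le_less_trans by blast
        then show ?thesis using gd' unfolding gdecomp_def by auto
      qed
      then show ?thesis by auto
    qed
    have seteq: "set (filter Q ss) = set (filter Q ss')" using setQ setQ' by simp
    have "filter Q ss = filter Q ss'"
      by (rule sorted_wrt_unique[OF sorted_wrt_filter[OF srt] sorted_wrt_filter[OF srt'] seteq])
        (simp_all add: sp_asym)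
    then have Leq: "takeWhile Q ss = takeWhile Q ss'" using twQ twQ' by simp
    define L where "L = takeWhile Q ss"
    have nQs: "\<not> Q s" "\<not> Q s'" unfolding Q_def using psp
      by (meson prefix_order.leD prefix_order.le_less_trans)+
    have "s \<in> set ss" using gd unfolding gdecomp_def by auto
    then have "dropWhile Q ss \<noteq> []" using nQs
      by (metis append_Nil2 set_takeWhileD takeWhile_dropWhile_id)
    then obtain t rest where dw: "dropWhile Q ss = t # rest" by (cases "dropWhile Q ss") auto
    then have ssd: "ss = L @ t # rest" "\<not> Q t" unfolding L_def using dropWhile_eq_Cons_conv by metis+
    have "s' \<in> set ss'" using gd' unfolding gdecomp_def by auto
    then have "dropWhile Q ss' \<noteq> []" using nQs
      by (metis append_Nil2 set_takeWhileD takeWhile_dropWhile_id)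
    then obtain t' rest' where dw': "dropWhile Q ss' = t' # rest'" by (cases "dropWhile Q ss'") auto
    then have ssd': "ss' = L @ t' # rest'" "\<not> Q t'" unfolding L_def Leq using dropWhile_eq_Cons_conv by metis+
    have "t \<in> set ss" using ssd by simp
    then have "prefix (f i t) (f i s)" using gd unfolding gdecomp_def by (auto simp: prefix_order.less_imp_le)
    then have pt: "prefix (p @ [b]) (f i t)" using prefix_split_par ssd(2) bc unfolding Q_def by metis
    have "t' \<in> set ss'" using ssd' by simp
    then have "prefix (f i t') (f i s')" using gd' unfolding gdecomp_def by (auto simp: prefix_order.less_imp_le)
    then have pt': "prefix (p @ [c]) (f i t')" using prefix_split_par ssd'(2) bc unfolding Q_def by metis
    have par: "f i t \<parallel> f i t'" by (rule par_of_prefixes[OF pt pt' bc(1)])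
    have lt: "\<forall>u\<in>set L. strict_prefix (f i u) (f i t)" using srt ssd(1) by (simp add: sorted_wrt_append)
    have lt': "\<forall>u\<in>set L. strict_prefix (f i u) (f i t')" using srt' ssd'(1) by (simp add: sorted_wrt_append)
    have X: "ddgamma f \<tau> i (map (f i) L @ [f i t]) (length L) \<parallel> ddgamma f \<tau> i (map (f i) L @ [f i t']) (length L)"
      by (rule key_par[OF assms(1) lt lt' par])
    have dec: "\<exists>E. ddf f \<tau> i s = concat (map (ddgamma f \<tau> i (map (f i) L)) [0..<length L])
                   @ ddgamma f \<tau> i (map (f i) L @ [f i x]) (length L) @ E"
      if "gdecomp f i s ss" "ss = L @ x # r" for s ss x r
    proof -
      define A where "A = map (f i) L"
      define B where "B = map (f i) (x # r)"
      have h1: "ddf f \<tau> i s = concat (map (ddgamma f \<tau> i (A @ B)) [0..<length (A @ B)])"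
        using ddf_eq[OF ct d2 c3 assms(1) that(1)] that(2) unfolding A_def B_def by simp
      have h2: "concat (map (ddgamma f \<tau> i (A @ B)) [0..<length (A @ B)]) = concat (map (ddgamma f \<tau> i A) [0..<length A])
         @ concat (map (ddgamma f \<tau> i (A @ B)) [length A..<length (A @ B)])"
        by (rule ddf_split)
      have h3: "[length A..<length (A @ B)] = length A # [Suc (length A)..<length (A @ B)]"
        by (rule upt_conv_Cons) (simp add: B_def)
      have h4: "ddgamma f \<tau> i (A @ B) (length A) = ddgamma f \<tau> i (map (f i) L @ [f i x]) (length L)"
        using ddgamma_app[of "length L" "map (f i) L @ [f i x]" f \<tau> i "map (f i) r"] unfolding A_def B_def by simp
      have "ddf f \<tau> i s = concat (map (ddgamma f \<tau> i (map (f i) L)) [0..<length L])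
                   @ ddgamma f \<tau> i (map (f i) L @ [f i x]) (length L) @ concat (map (ddgamma f \<tau> i (A @ B)) [Suc (length A)..<length (A @ B)])"
        unfolding h1 h2 h3 list.map concat.simps h4 unfolding A_def by simp
      then show ?thesis by blast
    qed
    obtain E where E: "ddf f \<tau> i s = concat (map (ddgamma f \<tau> i (map (f i) L)) [0..<length L])
                   @ ddgamma f \<tau> i (map (f i) L @ [f i t]) (length L) @ E" using dec[OF gd ssd(1)] by blast
    obtain E' where E': "ddf f \<tau> i s' = concat (map (ddgamma f \<tau> i (map (f i) L)) [0..<length L])
                   @ ddgamma f \<tau> i (map (f i) L @ [f i t']) (length L) @ E'" using dec[OF gd' ssd'(1)] by blast
    have "ddf f \<tau> i s \<parallel> ddf f \<tau> i s'" unfolding E E' by (rule par_app[OF parallel_append[OF X]])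
    then show False using assms(2) parallelD1 by blast
  qed
qed

end

theorem lemma25:
  fixes \<mu> :: "'a::finite \<Rightarrow> real" and m :: nat
    and f :: "nat \<Rightarrow> 'a \<Rightarrow> bool list" and \<tau> :: "nat \<Rightarrow> 'a \<Rightarrow> nat" and i :: nat
  assumes "card (UNIV :: 'a set) \<ge> 2" and "valid_mu \<mu>" and "F2 \<mu> m f \<tau>" and "i < m"
  shows "(\<forall>s ss. gdecomp f i s ss \<longrightarrow>
            (\<forall>r<length ss. length (ddgamma f \<tau> i (map (f i) ss) r) = length (gamma (map (f i) ss) r)))
       \<and> (\<forall>s. length (ddf f \<tau> i s) = length (f i s))
       \<and> (\<forall>s s'. prefix (f i s) (f i s') \<longleftrightarrow> prefix (ddf f \<tau> i s) (ddf f \<tau> i s'))"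
proof -
  have ct: "code_tuple m \<tau>" and d2: "dec2 m f \<tau>" and c3: "\<forall>j<m. 3 \<le> card (Pk f \<tau> 2 j [])"
    using assms(3) unfolding F2_def by auto
  show ?thesis
    using part1[OF ct d2 c3 assms(4)] part2[OF ct d2 c3 assms(4)]
      part3_fwd[OF ct d2 c3 assms(4)] part3_bwd[OF ct d2 c3 assms(4)] by blast
qed


end
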